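(* Let $\mathcal{A}$ be a primal algebra and let $<$ be a linear order on its universe $A$. Then $\mathbf{OV}_{\mathit{fin}}(\mathcal{A},<)$ is a reasonable order expansion of $\mathbf{V}_{\mathit{fin}}(\mathcal{A})$.
   Context: A primal algebra is a finite algebra with at least two elements in which every finitary operation on its universe is a term operation. $\mathbf{V}_{\mathit{fin}}(\mathcal{A})$ is the category whose objects are the finite algebras in the variety generated by $\mathcal{A}$ and whose morphisms are embeddings. For a linear order $<$ on $A$ and a positive integer $n$, the antilexicographic order $\sqsubset$ on $A^n$ is: $(x_1,\dots,x_n)\sqsubset(y_1,\dots,y_n)$ iff there is $s$ with $x_t=y_t$ for all $t>s$ and $x_s<y_s$. For a permutation $\pi$ of $\{1,\dots,n\}$, $\bar x\sqsubset_\pi\bar y$ iff $(x_{\pi(1)},\dots,x_{\pi(n)})\sqsubset(y_{\pi(1)},\dots,y_{\pi(n)})$; $\sqsubseteq_\pi$ is its reflexive version and $\mathcal{A}^n_{\sqsubseteq_\pi}$ is the power algebra $\mathcal{A}^n$ expanded by $\sqsubseteq_\pi$. $\mathbf{OV}_{\mathit{fin}}(\mathcal{A},<)$ is the category whose objects are all structures isomorphic to some $\mathcal{A}^n_{\sqsubseteq_\pi}$ and whose morphisms are embeddings. If $\mathbf{C}$ is a category of finite structures with embeddings and $\mathbf{C}^*$ a category of finite ordered structures with embeddings, $\mathbf{C}^*$ is an order expansion of $\mathbf{C}$ if for every object $(A,\Delta,<)$ of $\mathbf{C}^*$ the reduct $(A,\Delta)$ is an object of $\mathbf{C}$ and the forgetful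 functor $U:\mathbf{C}^*\to\mathbf{C}$ (dropping the order, identity on maps) is surjective on objects; it is reasonable if for all objects $\mathcal{A},\mathcal{B}$ of $\mathbf{C}$, every embedding $f:\mathcal{A}\to\mathcal{B}$ and every object $\mathcal{A}_<$ of $\mathbf{C}^*$ with $U(\mathcal{A}_<)=\mathcal{A}$ there is an object $\mathcal{B}_\sqsubset$ of $\mathbf{C}^*$ with $U(\mathcal{B}_\sqsubset)=\mathcal{B}$ and $f$ an embedding of $\mathcal{A}_<$ into $\mathcal{B}_\sqsubset$. *)

theory Defs
  imports Main
begin

text \<open>A signature is an arity function ar :: 'f => nat.  An algebra is a pair
  (carrier, ops) where ops g is applied to argument lists of length ar g.\<close>

type_synonym ('a,'f) alg = "'a set \<times> ('f \<Rightarrow> 'a list \<Rightarrow> 'a)"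

definition alg :: "('f \<Rightarrow> nat) \<Rightarrow> ('a,'f) alg \<Rightarrow> bool" where
  "alg ar X \<longleftrightarrow> fst X \<noteq> {} \<and>
     (\<forall>g xs. length xs = ar g \<and> set xs \<subseteq> fst X \<longrightarrow> snd X g xs \<in> fst X)"

definition alg_emb :: "('f \<Rightarrow> nat) \<Rightarrow> ('a \<Rightarrow> 'b) \<Rightarrow> ('a,'f) alg \<Rightarrow> ('b,'f) alg \<Rightarrow> bool" where
  "alg_emb ar h X Y \<longleftrightarrow> inj_on h (fst X) \<and> h ` fst X \<subseteq> fst Y \<and>
     (\<forall>g xs. length xs = ar g \<and> set xs \<subseteq> fst X \<longrightarrow> h (snd X g xs) = snd Y g (map h xs))"

datatype 'f trm = Var nat | App 'f "'f trm list"

fun wf_trm :: "('f \<Rightarrow> nat) \<Rightarrow> 'f trm \<Rightarrow> bool" where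
  "wf_trm ar (Var i) = True"
| "wf_trm ar (App g ts) = (length ts = ar g \<and> (\<forall>t\<in>set ts. wf_trm ar t))"

fun vars :: "'f trm \<Rightarrow> nat set" where
  "vars (Var i) = {i}"
| "vars (App g ts) = (\<Union>t\<in>set ts. vars t)"

fun eval :: "('f \<Rightarrow> 'a list \<Rightarrow> 'a) \<Rightarrow> (nat \<Rightarrow> 'a) \<Rightarrow> 'f trm \<Rightarrow> 'a" where
  "eval ops env (Var i) = env i"
| "eval ops env (App g ts) = ops g (map (eval ops env) ts)"

definition holds :: "('a,'f) alg \<Rightarrow> 'f trm \<Rightarrow> 'f trm \<Rightarrow> bool" where
  "holds X s t \<longleftrightarrow> (\<forall>env. range env \<subseteq> fst X \<longrightarrow> eval (snd X) env s = eval (snd X) env t)"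

definition primal :: "('f \<Rightarrow> nat) \<Rightarrow> ('a,'f) alg \<Rightarrow> bool" where
  "primal ar A \<longleftrightarrow> alg ar A \<and> finite (fst A) \<and> card (fst A) \<ge> 2 \<and>
     (\<forall>n\<ge>1. \<forall>G :: 'a list \<Rightarrow> 'a.
        (\<forall>xs. length xs = n \<and> set xs \<subseteq> fst A \<longrightarrow> G xs \<in> fst A) \<longrightarrow>
        (\<exists>t. wf_trm ar t \<and> vars t \<subseteq> {..<n} \<and>
           (\<forall>xs. length xs = n \<and> set xs \<subseteq> fst A \<longrightarrow> eval (snd A) (\<lambda>i. xs ! i) t = G xs)))"

text \<open>Objects: finite algebras (of the same signature) in the variety generated by A,
  i.e. satisfying every identity valid in A.\<close>
definition Vfin :: "('f \<Rightarrow> nat) \<Rightarrow> ('a,'f) alg \<Rightarrow> ('b,'f) alg \<Rightarrow> bool" where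
  "Vfin ar A X \<longleftrightarrow> alg ar X \<and> finite (fst X) \<and>
     (\<forall>s t. wf_trm ar s \<and> wf_trm ar t \<and> holds A s t \<longrightarrow> holds X s t)"

definition pow_carrier :: "('a,'f) alg \<Rightarrow> nat \<Rightarrow> 'a list set" where
  "pow_carrier A n = {xs. length xs = n \<and> set xs \<subseteq> fst A}"

definition pow_ops :: "('a,'f) alg \<Rightarrow> nat \<Rightarrow> 'f \<Rightarrow> 'a list list \<Rightarrow> 'a list" where
  "pow_ops A n g xss = map (\<lambda>i. snd A g (map (\<lambda>xs. xs ! i) xss)) [0..<n]"

text \<open>Positions are 0-indexed; pi is a permutation of {0..<n}.
  x is antilexicographically below y w.r.t. pi.\<close>
definition antilex_less :: "('a \<times> 'a) set \<Rightarrow> (nat \<Rightarrow> nat) \<Rightarrow> nat \<Rightarrow> 'a list \<Rightarrow> 'a list \<Rightarrow> bool" where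
  "antilex_less lt pi n xs ys \<longleftrightarrow>
     (\<exists>s<n. (\<forall>t. s < t \<and> t < n \<longrightarrow> xs ! (pi t) = ys ! (pi t)) \<and>
            (xs ! (pi s), ys ! (pi s)) \<in> lt)"

definition antilex_le :: "('a \<times> 'a) set \<Rightarrow> (nat \<Rightarrow> nat) \<Rightarrow> nat \<Rightarrow> 'a list \<Rightarrow> 'a list \<Rightarrow> bool" where
  "antilex_le lt pi n xs ys \<longleftrightarrow> xs = ys \<or> antilex_less lt pi n xs ys"

definition OVfin :: "('f \<Rightarrow> nat) \<Rightarrow> ('a,'f) alg \<Rightarrow> ('a \<times> 'a) set \<Rightarrow>
    ('b,'f) alg \<times> ('b \<Rightarrow> 'b \<Rightarrow> bool) \<Rightarrow> bool" where
  "OVfin ar A lt XO \<longleftrightarrow> (case XO of (X, le) \<Rightarrow> alg ar X \<and>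
     (\<exists>n pi h. bij_betw pi {..<n} {..<n} \<and> bij_betw h (fst X) (pow_carrier A n) \<and>
        (\<forall>g xs. length xs = ar g \<and> set xs \<subseteq> fst X \<longrightarrow>
            h (snd X g xs) = pow_ops A n g (map h xs)) \<and>
        (\<forall>x\<in>fst X. \<forall>y\<in>fst X. le x y \<longleftrightarrow> antilex_le lt pi n (h x) (h y))))"

definition linear_on :: "'b set \<Rightarrow> ('b \<Rightarrow> 'b \<Rightarrow> bool) \<Rightarrow> bool" where
  "linear_on S le \<longleftrightarrow> (\<forall>x\<in>S. le x x) \<and>
     (\<forall>x\<in>S. \<forall>y\<in>S. le x y \<and> le y x \<longrightarrow> x = y) \<and>
     (\<forall>x\<in>S. \<forall>y\<in>S. \<forall>z\<in>S. le x y \<and> le y z \<longrightarrow> le x z) \<and>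
     (\<forall>x\<in>S. \<forall>y\<in>S. le x y \<or> le y x)"

definition ord_emb :: "('f \<Rightarrow> nat) \<Rightarrow> ('a \<Rightarrow> 'b) \<Rightarrow> ('a,'f) alg \<times> ('a \<Rightarrow> 'a \<Rightarrow> bool) \<Rightarrow>
    ('b,'f) alg \<times> ('b \<Rightarrow> 'b \<Rightarrow> bool) \<Rightarrow> bool" where
  "ord_emb ar h XO YO \<longleftrightarrow> alg_emb ar h (fst XO) (fst YO) \<and>
     (\<forall>x\<in>fst (fst XO). \<forall>y\<in>fst (fst XO). snd XO x y \<longleftrightarrow> snd YO (h x) (h y))"

text \<open>C* (objects Cs) is an order expansion of C (objects C), on structures with
  carrier type 'b: every C*-object is a finite linearly ordered structure whose
  reduct is a C-object, and the forgetful functor is surjective on objects.\<close>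
definition order_expansion :: "(('b,'f) alg \<Rightarrow> bool) \<Rightarrow>
    (('b,'f) alg \<times> ('b \<Rightarrow> 'b \<Rightarrow> bool) \<Rightarrow> bool) \<Rightarrow> bool" where
  "order_expansion C Cs \<longleftrightarrow>
     (\<forall>X le. Cs (X, le) \<longrightarrow> finite (fst X) \<and> linear_on (fst X) le \<and> C X) \<and>
     (\<forall>X. C X \<longrightarrow> (\<exists>le. Cs (X, le)))"

text \<open>Reasonableness, with source objects of carrier type 'b and target objects of
  carrier type 'c (C1/Cs1 and C2/Cs2 are the same categories at these two types).\<close>
definition reasonable :: "('f \<Rightarrow> nat) \<Rightarrow> (('b,'f) alg \<Rightarrow> bool) \<Rightarrow> (('c,'f) alg \<Rightarrow> bool) \<Rightarrow>
    (('b,'f) alg \<times> ('b \<Rightarrow> 'b \<Rightarrow> bool) \<Rightarrow> bool) \<Rightarrow>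
    (('c,'f) alg \<times> ('c \<Rightarrow> 'c \<Rightarrow> bool) \<Rightarrow> bool) \<Rightarrow> bool" where
  "reasonable ar C1 C2 Cs1 Cs2 \<longleftrightarrow>
     (\<forall>X Y h le. C1 X \<and> C2 Y \<and> alg_emb ar h X Y \<and> Cs1 (X, le) \<longrightarrow>
        (\<exists>le'. Cs2 (Y, le') \<and> ord_emb ar h (X, le) (Y, le')))"

end

theory Submission
  imports Defs
begin


lemma eval_cong:
  "(\<And>i. i \<in> vars t \<Longrightarrow> env i = env' i) \<Longrightarrow> eval ops env t = eval ops env' t"
proof (induction t)
  case (App g ts) then show ?case by (auto intro!: map_cong arg_cong[where f="ops g"])
qed simp

lemma eval_closed:
  assumes "alg ar X" shows "wf_trm ar t \<Longrightarrow> (\<And>i. i \<in> vars t \<Longrightarrow> env i \<in> fst X) \<Longrightarrow> eval (snd X) env t \<in> fst X"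
proof (induction t)
  case (Var x) then show ?case by simp
next
  case (App g ts)
  have "set (map (eval (snd X) env) ts) \<subseteq> fst X" using App by auto
  then show ?case using assms App unfolding alg_def by auto
qed

lemma pow_carrier_finite: "finite (fst A) \<Longrightarrow> finite (pow_carrier A n)"
  unfolding pow_carrier_def using finite_lists_length_eq[of "fst A" n] by (simp add: conj_commute)

lemma pow_ops_closed:
  assumes "alg ar A" "length us = ar g" "set us \<subseteq> pow_carrier A n"
  shows "pow_ops A n g us \<in> pow_carrier A n"
proof -
  have "\<forall>k<n. snd A g (map (\<lambda>xs. xs ! k) us) \<in> fst A"
  proof (intro allI impI)
    fix k assume k: "k < n"
    have "set (map (\<lambda>xs. xs ! k) us) \<subseteq> fst A"
      using assms(3) k unfolding pow_carrier_def by (auto dest!: subsetD intro!: nth_mem[THEN subsetD[rotated]])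
    then show "snd A g (map (\<lambda>xs. xs ! k) us) \<in> fst A" using assms(1,2) unfolding alg_def by auto
  qed
  then show ?thesis unfolding pow_carrier_def pow_ops_def by auto
qed

lemma eval_pow:
  assumes "alg ar A" shows "wf_trm ar t \<Longrightarrow> (\<And>i. i \<in> vars t \<Longrightarrow> env i \<in> pow_carrier A n) \<Longrightarrow>
    eval (pow_ops A n) env t = map (\<lambda>k. eval (snd A) (\<lambda>j. env j ! k) t) [0..<n]"
proof (induction t)
  case (Var x) then show ?case by (auto simp: pow_carrier_def intro: nth_equalityI)
next
  case (App g ts)
  have h: "map (eval (pow_ops A n) env) ts = map (\<lambda>t. map (\<lambda>k. eval (snd A) (\<lambda>j. env j ! k) t) [0..<n]) ts"
    using App by (auto intro!: map_cong)
  have "eval (pow_ops A n) env (App g ts) = pow_ops A n g (map (\<lambda>t. map (\<lambda>k. eval (snd A) (\<lambda>j. env j ! k) t) [0..<n]) ts)"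
    by (simp only: eval.simps h)
  also have "\<dots> = map (\<lambda>k. eval (snd A) (\<lambda>j. env j ! k) (App g ts)) [0..<n]"
    by (simp add: pow_ops_def o_def)
  finally show ?case .
qed


lemma prim_term_gen:
  fixes A :: "('a,'f) alg"
  assumes prim: "primal ar A" and "m \<ge> 1" "\<And>xs. length xs = m \<Longrightarrow> set xs \<subseteq> fst A \<Longrightarrow> P xs \<in> fst A"
  shows "\<exists>t. wf_trm ar t \<and> vars t \<subseteq> {..<m} \<and>
           (\<forall>xs. length xs = m \<and> set xs \<subseteq> fst A \<longrightarrow> eval (snd A) (\<lambda>i. xs ! i) t = P xs)"
proof -
  have H: "\<forall>n\<ge>1. \<forall>G :: 'a list \<Rightarrow> 'a.
        (\<forall>xs. length xs = n \<and> set xs \<subseteq> fst A \<longrightarrow> G xs \<in> fst A) \<longrightarrow>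
        (\<exists>t. wf_trm ar t \<and> vars t \<subseteq> {..<n} \<and>
           (\<forall>xs. length xs = n \<and> set xs \<subseteq> fst A \<longrightarrow> eval (snd A) (\<lambda>i. xs ! i) t = G xs))"
    using prim unfolding primal_def by (elim conjE)
  show ?thesis by (rule H[rule_format, OF assms(2)]) (use assms(3) in auto)
qed

locale foster =
  fixes ar :: "'f \<Rightarrow> nat" and A :: "('a,'f) alg" and X :: "('b,'f) alg"
  assumes prim: "primal ar A" and VX: "Vfin ar A X"
begin

lemma algA: "alg ar A" and finA: "finite (fst A)" and cardA: "card (fst A) \<ge> 2"
  using prim unfolding primal_def by blast+

lemma algX: "alg ar X" and finX: "finite (fst X)"
  using VX unfolding Vfin_def by blast+

lemma two: "\<exists>a b. a \<in> fst A \<and> b \<in> fst A \<and> a \<noteq> b"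
  using finA cardA by (metis card_le_Suc0_iff_eq not_less_eq_eq numeral_2_eq_2)

definition xs0 :: "'b list" where "xs0 = (SOME xs. set xs = fst X)"

lemma xs0: "set xs0 = fst X"
  unfolding xs0_def using finite_list[OF finX] by (rule someI_ex)

definition N where "N = length xs0"

lemma N_pos: "N \<ge> 1"
  using xs0 algX unfolding N_def alg_def by (cases xs0) auto

definition PC where "PC = pow_carrier A N"
definition funcs where "funcs = {G. \<forall>c\<in>PC. G c \<in> fst A}"

definition tm where "tm G = (SOME t. wf_trm ar t \<and> vars t \<subseteq> {..<N} \<and>
   (\<forall>c\<in>PC. eval (snd A) (\<lambda>i. c!i) t = G c))"

lemma prim_term:
  assumes "m \<ge> 1" "\<And>xs. length xs = m \<Longrightarrow> set xs \<subseteq> fst A \<Longrightarrow> P xs \<in> fst A"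
  shows "\<exists>t. wf_trm ar t \<and> vars t \<subseteq> {..<m} \<and>
           (\<forall>xs. length xs = m \<and> set xs \<subseteq> fst A \<longrightarrow> eval (snd A) (\<lambda>i. xs ! i) t = P xs)"
  by (rule prim_term_gen[OF prim assms])

lemma tm: assumes "G \<in> funcs"
  shows "wf_trm ar (tm G) \<and> vars (tm G) \<subseteq> {..<N} \<and> (\<forall>c\<in>PC. eval (snd A) (\<lambda>i. c!i) (tm G) = G c)"
proof -
  have "\<exists>t. wf_trm ar t \<and> vars t \<subseteq> {..<N} \<and> (\<forall>c\<in>PC. eval (snd A) (\<lambda>i. c!i) t = G c)"
    using prim_term[OF N_pos, of G] assms unfolding funcs_def PC_def pow_carrier_def by auto
  then show ?thesis unfolding tm_def by (rule someI_ex)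
qed

definition Th where "Th G = eval (snd X) (\<lambda>i. xs0 ! i) (tm G)"

lemma welldef:
  assumes "wf_trm ar s" "wf_trm ar t" "vars s \<subseteq> {..<N}" "vars t \<subseteq> {..<N}"
    "\<forall>c\<in>PC. eval (snd A) (\<lambda>i. c!i) s = eval (snd A) (\<lambda>i. c!i) t"
  shows "eval (snd X) (\<lambda>i. xs0!i) s = eval (snd X) (\<lambda>i. xs0!i) t"
proof -
  have "holds A s t" unfolding holds_def
  proof (intro allI impI)
    fix env :: "nat \<Rightarrow> 'a" assume env: "range env \<subseteq> fst A"
    define c where "c = map env [0..<N]"
    have cP: "c \<in> PC" using env unfolding c_def PC_def pow_carrier_def by auto
    have "eval (snd A) env s = eval (snd A) (\<lambda>i. c!i) s"
      by (rule eval_cong) (use assms(3) in \<open>auto simp: c_def\<close>)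
    also have "\<dots> = eval (snd A) (\<lambda>i. c!i) t" using assms(5) cP by auto
    also have "\<dots> = eval (snd A) env t"
      by (rule eval_cong) (use assms(4) in \<open>auto simp: c_def\<close>)
    finally show "eval (snd A) env s = eval (snd A) env t" .
  qed
  then have hX: "holds X s t" using VX assms(1,2) unfolding Vfin_def by blast
  obtain x1 where x1: "x1 \<in> fst X" using algX unfolding alg_def by auto
  define env where "env = (\<lambda>i. if i < N then xs0 ! i else x1)"
  have "range env \<subseteq> fst X" using x1 xs0 unfolding env_def N_def by auto
  then have e: "eval (snd X) env s = eval (snd X) env t" using hX unfolding holds_def by blast
  have "eval (snd X) (\<lambda>i. xs0!i) s = eval (snd X) env s"
    by (rule eval_cong) (use assms(3) in \<open>auto simp: env_def\<close>)
  also have "\<dots> = eval (snd X) env t" by (rule e)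
  also have "\<dots> = eval (snd X) (\<lambda>i. xs0!i) t"
    by (rule eval_cong) (use assms(4) in \<open>auto simp: env_def\<close>)
  finally show ?thesis .
qed

lemma Th_rep:
  assumes "G \<in> funcs" "wf_trm ar t" "vars t \<subseteq> {..<N}" "\<forall>c\<in>PC. eval (snd A) (\<lambda>i. c!i) t = G c"
  shows "Th G = eval (snd X) (\<lambda>i. xs0!i) t"
  unfolding Th_def using tm[OF assms(1)] assms by (intro welldef) auto

lemma Th_ext:
  assumes "G \<in> funcs" "\<forall>c\<in>PC. G c = G' c"
  shows "Th G' = Th G"
proof -
  have G': "G' \<in> funcs" using assms unfolding funcs_def by auto
  show ?thesis using Th_rep[OF G', of "tm G"] tm[OF assms(1)] assms(2) by (simp add: Th_def)
qed

lemma Th_closed: "G \<in> funcs \<Longrightarrow> Th G \<in> fst X"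
proof -
  assume G: "G \<in> funcs"
  show ?thesis unfolding Th_def
  proof (rule eval_closed[OF algX])
    show "wf_trm ar (tm G)" using tm[OF G] by simp
    fix i assume "i \<in> vars (tm G)"
    then have "i < length xs0" using tm[OF G] N_def by auto
    then show "xs0 ! i \<in> fst X" using xs0 nth_mem by blast
  qed
qed

lemma Th_basic:
  assumes "length Hs = ar g" "set Hs \<subseteq> funcs"
  shows "Th (\<lambda>c. snd A g (map (\<lambda>H. H c) Hs)) = snd X g (map Th Hs)"
proof -
  have inF: "(\<lambda>c. snd A g (map (\<lambda>H. H c) Hs)) \<in> funcs"
    unfolding funcs_def
  proof (rule CollectI, rule ballI)
    fix c assume c: "c \<in> PC"
    have "set (map (\<lambda>H. H c) Hs) \<subseteq> fst A" using assms(2) c unfolding funcs_def by auto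
    then show "snd A g (map (\<lambda>H. H c) Hs) \<in> fst A" using algA assms(1) unfolding alg_def by auto
  qed
  have tms: "\<And>H. H \<in> set Hs \<Longrightarrow> wf_trm ar (tm H) \<and> vars (tm H) \<subseteq> {..<N} \<and> (\<forall>c\<in>PC. eval (snd A) (\<lambda>i. c!i) (tm H) = H c)"
    using assms(2) tm by blast
  have "Th (\<lambda>c. snd A g (map (\<lambda>H. H c) Hs)) = eval (snd X) (\<lambda>i. xs0!i) (App g (map tm Hs))"
  proof (rule Th_rep[OF inF])
    show "wf_trm ar (App g (map tm Hs))" using tms assms(1) by auto
    show "vars (App g (map tm Hs)) \<subseteq> {..<N}" using tms by auto
    show "\<forall>c\<in>PC. eval (snd A) (\<lambda>i. c!i) (App g (map tm Hs)) = snd A g (map (\<lambda>H. H c) Hs)"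
      using tms by (auto intro!: arg_cong[where f="snd A g"])
  qed
  also have "\<dots> = snd X g (map Th Hs)" by (simp add: o_def Th_def[abs_def])
  finally show ?thesis .
qed

lemma Th_term:
  "wf_trm ar t \<Longrightarrow> (\<And>j. j \<in> vars t \<Longrightarrow> \<gamma> j \<in> funcs) \<Longrightarrow>
    Th (\<lambda>c. eval (snd A) (\<lambda>j. \<gamma> j c) t) = eval (snd X) (\<lambda>j. Th (\<gamma> j)) t"
proof (induction t)
  case (Var x) then show ?case by simp
next
  case (App g ts)
  define Hs where "Hs = map (\<lambda>t c. eval (snd A) (\<lambda>j. \<gamma> j c) t) ts"
  have Hs: "set Hs \<subseteq> funcs"
    using App.prems unfolding Hs_def funcs_def PC_def
    by (auto intro!: eval_closed[OF algA])
  have "Th (\<lambda>c. eval (snd A) (\<lambda>j. \<gamma> j c) (App g ts)) = Th (\<lambda>c. snd A g (map (\<lambda>H. H c) Hs))"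
    by (simp add: Hs_def o_def)
  also have "\<dots> = snd X g (map Th Hs)" using Th_basic[OF _ Hs] App.prems by (simp add: Hs_def)
  also have "map Th Hs = map (eval (snd X) (\<lambda>j. Th (\<gamma> j))) ts"
    unfolding Hs_def using App by auto
  finally show ?case by simp
qed

lemma Th_surj: "x \<in> fst X \<Longrightarrow> \<exists>G\<in>funcs. Th G = x"
proof -
  assume "x \<in> fst X"
  then obtain i where i: "i < N" "x = xs0 ! i" using xs0 unfolding N_def by (metis in_set_conv_nth)
  have F: "(\<lambda>c. c ! i) \<in> funcs" using i unfolding funcs_def PC_def pow_carrier_def by auto
  have "Th (\<lambda>c. c ! i) = eval (snd X) (\<lambda>i. xs0!i) (Var i)"
    by (rule Th_rep[OF F]) (use i in auto)
  then show ?thesis using F i by auto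
qed

end


context foster begin

definition S where "S = {c\<in>PC. \<forall>G G'. G\<in>funcs \<longrightarrow> G'\<in>funcs \<longrightarrow> Th G = Th G' \<longrightarrow> G c = G' c}"

lemma single_point:
  assumes G: "G \<in> funcs" and c: "c \<in> PC" "c \<notin> S" and v: "v \<in> fst A"
  shows "Th (G(c := v)) = Th G"
proof -
  obtain H H' where HH: "H \<in> funcs" "H' \<in> funcs" "Th H = Th H'" "H c \<noteq> H' c"
    using c unfolding S_def by blast
  obtain a b where ab: "a \<in> fst A" "b \<in> fst A" "a \<noteq> b" using two by blast
  define R where "R = (\<lambda>xs::'a list. if xs!0 \<noteq> xs!1 \<and> xs!2 = b then xs!4 else xs!3)"
  obtain tR where tR: "wf_trm ar tR" "vars tR \<subseteq> {..<5}"
     "\<forall>xs. length xs = 5 \<and> set xs \<subseteq> fst A \<longrightarrow> eval (snd A) (\<lambda>i. xs ! i) tR = R xs"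
  proof -
    have "\<exists>t. wf_trm ar t \<and> vars t \<subseteq> {..<5} \<and>
           (\<forall>xs. length xs = 5 \<and> set xs \<subseteq> fst A \<longrightarrow> eval (snd A) (\<lambda>i. xs ! i) t = R xs)"
    proof (rule prim_term)
      fix xs :: "'a list" assume "length xs = 5" "set xs \<subseteq> fst A"
      then show "R xs \<in> fst A" unfolding R_def by (auto intro!: nth_mem[THEN subsetD[rotated]])
    qed simp
    then show ?thesis using that by blast
  qed
  define I where "I = (\<lambda>d. if d = c then b else a)"
  define G2 where "G2 = G(c := v)"
  define g1 where "g1 = (\<lambda>j::nat. if j = 0 then H else if j = 1 then H' else if j = 2 then I else if j = 3 then G else G2)"
  define g2 where "g2 = (\<lambda>j::nat. if j = 0 then H else if j = 1 then H else if j = 2 then I else if j = 3 then G else G2)"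
  have I: "I \<in> funcs" using ab unfolding I_def funcs_def by auto
  have G2f: "G2 \<in> funcs" using G v unfolding G2_def funcs_def by auto
  have g1f: "\<And>j. g1 j \<in> funcs" using HH I G G2f unfolding g1_def by auto
  have g2f: "\<And>j. g2 j \<in> funcs" using HH I G G2f unfolding g2_def by auto
  have ev: "eval (snd A) (\<lambda>j. g d j) tR = R (map (\<lambda>j. g d j) [0..<5])"
    if "\<And>j. g d j \<in> fst A" for g :: "'a list \<Rightarrow> nat \<Rightarrow> 'a" and d
  proof -
    have "eval (snd A) (\<lambda>j. g d j) tR = eval (snd A) (\<lambda>i. map (\<lambda>j. g d j) [0..<5] ! i) tR"
      by (rule eval_cong) (use tR(2) in auto)
    also have "\<dots> = R (map (\<lambda>j. g d j) [0..<5])"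
      by (rule tR(3)[rule_format]) (use that in auto)
    finally show ?thesis .
  qed
  have e1: "\<forall>d\<in>PC. eval (snd A) (\<lambda>j. g1 j d) tR = G2 d"
  proof
    fix d assume d: "d \<in> PC"
    have "eval (snd A) (\<lambda>j. g1 j d) tR = R (map (\<lambda>j. g1 j d) [0..<5])"
      using ev[of "\<lambda>d j. g1 j d" d] g1f d unfolding funcs_def by auto
    also have "\<dots> = G2 d" using HH(4) ab unfolding R_def g1_def I_def G2_def
      by (simp add: numeral_eq_Suc upt_rec)
    finally show "eval (snd A) (\<lambda>j. g1 j d) tR = G2 d" .
  qed
  have e2: "\<forall>d\<in>PC. eval (snd A) (\<lambda>j. g2 j d) tR = G d"
  proof
    fix d assume d: "d \<in> PC"
    have "eval (snd A) (\<lambda>j. g2 j d) tR = R (map (\<lambda>j. g2 j d) [0..<5])"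
      using ev[of "\<lambda>d j. g2 j d" d] g2f d unfolding funcs_def by auto
    also have "\<dots> = G d" unfolding R_def g2_def
      by (simp add: numeral_eq_Suc upt_rec)
    finally show "eval (snd A) (\<lambda>j. g2 j d) tR = G d" .
  qed
  have "Th (\<lambda>d. eval (snd A) (\<lambda>j. g1 j d) tR) = eval (snd X) (\<lambda>j. Th (g1 j)) tR"
    using Th_term[OF tR(1)] g1f by blast
  also have "\<dots> = eval (snd X) (\<lambda>j. Th (g2 j)) tR"
    by (rule eval_cong) (use HH(3) in \<open>simp add: g1_def g2_def\<close>)
  also have "\<dots> = Th (\<lambda>d. eval (snd A) (\<lambda>j. g2 j d) tR)"
    using Th_term[OF tR(1)] g2f by simp
  finally have "Th (\<lambda>d. eval (snd A) (\<lambda>j. g1 j d) tR) = Th (\<lambda>d. eval (snd A) (\<lambda>j. g2 j d) tR)" .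
  moreover have "Th (\<lambda>d. eval (snd A) (\<lambda>j. g1 j d) tR) = Th G2"
    using Th_ext[OF G2f] e1 by metis
  moreover have "Th (\<lambda>d. eval (snd A) (\<lambda>j. g2 j d) tR) = Th G"
    using Th_ext[OF G] e2 by metis
  ultimately show ?thesis unfolding G2_def by simp
qed

end




context foster begin

lemma key_aux:
  "\<forall>G G'. G \<in> funcs \<longrightarrow> G' \<in> funcs \<longrightarrow> (\<forall>c\<in>S. G c = G' c) \<longrightarrow>
     card {c\<in>PC. G c \<noteq> G' c} = k \<longrightarrow> Th G = Th G'"
proof (induction k)
  case 0
  have finPC: "finite PC" unfolding PC_def using pow_carrier_finite[OF finA] .
  show ?case
  proof (intro allI impI)
    fix G G' assume G: "G \<in> funcs" "G' \<in> funcs" "card {c\<in>PC. G c \<noteq> G' c} = 0"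
    then have "\<forall>c\<in>PC. G c = G' c" using finPC by auto
    then show "Th G = Th G'" using Th_ext[OF G(1)] by metis
  qed
next
  case (Suc k)
  have finPC: "finite PC" unfolding PC_def using pow_carrier_finite[OF finA] .
  show ?case
  proof (intro allI impI)
    fix G G' assume G: "G \<in> funcs" "G' \<in> funcs" and agree: "\<forall>c\<in>S. G c = G' c"
      and cd: "card {c\<in>PC. G c \<noteq> G' c} = Suc k"
    have "{c\<in>PC. G c \<noteq> G' c} \<noteq> {}" using cd by (intro notI) simp
    then obtain c where c: "c \<in> PC" "G c \<noteq> G' c" by blast
    have cS: "c \<notin> S" using agree c by auto
    have v: "G' c \<in> fst A" using G(2) c unfolding funcs_def by auto
    have G3: "G(c := G' c) \<in> funcs" using G(1) v unfolding funcs_def by auto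
    have eq: "{d\<in>PC. (G(c := G' c)) d \<noteq> G' d} = {d\<in>PC. G d \<noteq> G' d} - {c}" by auto
    have "card {d\<in>PC. (G(c := G' c)) d \<noteq> G' d} = k"
      unfolding eq using cd c finPC by simp
    then have "Th (G(c := G' c)) = Th G'" using Suc.IH G3 G(2) agree by auto
    moreover have "Th (G(c := G' c)) = Th G" using single_point[OF G(1) c(1) cS v] .
    ultimately show "Th G = Th G'" by simp
  qed
qed

lemma key: "G \<in> funcs \<Longrightarrow> G' \<in> funcs \<Longrightarrow> \<forall>c\<in>S. G c = G' c \<Longrightarrow> Th G = Th G'"
  using key_aux by blast

lemma S_agree: "G \<in> funcs \<Longrightarrow> G' \<in> funcs \<Longrightarrow> Th G = Th G' \<Longrightarrow> c \<in> S \<Longrightarrow> G c = G' c"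
  unfolding S_def by blast

lemma S_PC: "S \<subseteq> PC" unfolding S_def by auto

definition ss where "ss = (SOME l. distinct l \<and> set l = S)"

lemma ss: "distinct ss" "set ss = S"
proof -
  have "finite S" using S_PC pow_carrier_finite[OF finA] unfolding PC_def by (rule finite_subset)
  then have "\<exists>l. distinct l \<and> set l = S" using finite_distinct_list by blast
  then have "distinct ss \<and> set ss = S" unfolding ss_def by (rule someI_ex)
  then show "distinct ss" "set ss = S" by auto
qed

definition n where "n = length ss"
definition Gof where "Gof x = (SOME G. G \<in> funcs \<and> Th G = x)"
definition hh where "hh x = map (Gof x) ss"

lemma Gof: "x \<in> fst X \<Longrightarrow> Gof x \<in> funcs \<and> Th (Gof x) = x"
proof -
  assume "x \<in> fst X"
  then have "\<exists>G. G \<in> funcs \<and> Th G = x" using Th_surj by blast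
  then show ?thesis unfolding Gof_def by (rule someI_ex)
qed

lemma hh_inj: "inj_on hh (fst X)"
proof (rule inj_onI)
  fix x y assume xy: "x \<in> fst X" "y \<in> fst X" "hh x = hh y"
  then have "\<forall>c\<in>S. Gof x c = Gof y c" unfolding hh_def using ss(2) by (auto simp: map_eq_conv)
  then have "Th (Gof x) = Th (Gof y)" using key Gof xy by blast
  then show "x = y" using Gof xy by simp
qed

lemma hh_bij: "bij_betw hh (fst X) (pow_carrier A n)"
proof (rule bij_betw_imageI[OF hh_inj])
  show "hh ` fst X = pow_carrier A n"
  proof
    show "hh ` fst X \<subseteq> pow_carrier A n"
    proof
      fix y assume "y \<in> hh ` fst X"
      then obtain x where x: "x \<in> fst X" "y = hh x" by auto
      have "\<forall>c\<in>S. Gof x c \<in> fst A" using Gof[OF x(1)] S_PC unfolding funcs_def by auto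
      then show "y \<in> pow_carrier A n" using x ss unfolding hh_def pow_carrier_def n_def by auto
    qed
  next
    show "pow_carrier A n \<subseteq> hh ` fst X"
    proof
      fix ys assume ys: "ys \<in> pow_carrier A n"
      obtain a where a: "a \<in> fst A" using two by blast
      define G where "G = (\<lambda>c. case map_of (zip ss ys) c of Some y \<Rightarrow> y | None \<Rightarrow> a)"
      have Gf: "G \<in> funcs" unfolding funcs_def G_def
      proof (rule CollectI, rule ballI)
        fix c show "(case map_of (zip ss ys) c of Some y \<Rightarrow> y | None \<Rightarrow> a) \<in> fst A"
        proof (cases "map_of (zip ss ys) c")
          case (Some y)
          then have "y \<in> set ys" by (meson map_of_SomeD set_zip_rightD)
          then show ?thesis using Some ys unfolding pow_carrier_def by auto
        qed (use a in auto)
      qed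
      have len: "length ys = n" using ys unfolding pow_carrier_def by simp
      have Gi: "G (ss ! i) = ys ! i" if "i < n" for i
        unfolding G_def using map_of_zip_nth[of ss ys i] len ss(1) that n_def by simp
      have "hh (Th G) = map G ss"
        unfolding hh_def
      proof (rule map_cong[OF refl])
        fix c assume "c \<in> set ss"
        then show "Gof (Th G) c = G c" using S_agree[OF _ Gf, of "Gof (Th G)" c] Gof[OF Th_closed[OF Gf]] ss(2) by auto
      qed
      also have "\<dots> = ys" using Gi len n_def by (auto intro: nth_equalityI)
      finally show "ys \<in> hh ` fst X" using Th_closed[OF Gf] by (metis imageI)
    qed
  qed
qed

lemma hh_hom:
  assumes "length xs = ar g" "set xs \<subseteq> fst X"
  shows "hh (snd X g xs) = pow_ops A n g (map hh xs)"
proof -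
  define Hs where "Hs = map Gof xs"
  have Hs: "set Hs \<subseteq> funcs" using Gof assms(2) unfolding Hs_def by auto
  have "map Th Hs = xs" unfolding Hs_def map_map by (rule map_idI) (use Gof assms(2) in auto)
  then have e: "snd X g xs = Th (\<lambda>c. snd A g (map (\<lambda>H. H c) Hs))"
    using Th_basic[OF _ Hs] assms(1) unfolding Hs_def by simp
  define K where "K = (\<lambda>c. snd A g (map (\<lambda>H. H c) Hs))"
  have Kf: "K \<in> funcs" unfolding funcs_def K_def
  proof (rule CollectI, rule ballI)
    fix c assume c: "c \<in> PC"
    have "set (map (\<lambda>H. H c) Hs) \<subseteq> fst A" using Hs c unfolding funcs_def by auto
    then show "snd A g (map (\<lambda>H. H c) Hs) \<in> fst A" using algA assms(1) unfolding alg_def Hs_def by auto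
  qed
  have "hh (snd X g xs) = map K ss"
    unfolding hh_def e K_def[symmetric]
  proof (rule map_cong[OF refl])
    fix c assume "c \<in> set ss"
    then show "Gof (Th K) c = K c" using S_agree[OF _ Kf, of "Gof (Th K)" c] Gof[OF Th_closed[OF Kf]] ss(2) by auto
  qed
  also have "\<dots> = pow_ops A n g (map hh xs)"
  proof (rule nth_equalityI)
    show "length (map K ss) = length (pow_ops A n g (map hh xs))" by (simp add: pow_ops_def n_def)
    fix i assume "i < length (map K ss)"
    then have i: "i < n" by (simp add: n_def)
    have "map K ss ! i = snd A g (map (\<lambda>x. Gof x (ss ! i)) xs)"
      using i by (simp add: n_def K_def Hs_def o_def)
    also have "\<dots> = pow_ops A n g (map hh xs) ! i"
      using i by (simp add: pow_ops_def hh_def o_def n_def)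
    finally show "map K ss ! i = pow_ops A n g (map hh xs) ! i" .
  qed
  finally show ?thesis .
qed

end

lemma foster:
  assumes "primal ar A" "Vfin ar A X"
  shows "\<exists>n h. bij_betw h (fst X) (pow_carrier A n) \<and>
        (\<forall>g xs. length xs = ar g \<and> set xs \<subseteq> fst X \<longrightarrow> h (snd X g xs) = pow_ops A n g (map h xs))"
proof -
  interpret foster ar A X using assms by unfold_locales
  show ?thesis using hh_bij hh_hom by blast
qed



lemma antilex_antisym:
  assumes lt: "strict_linear_order_on B lt"
  shows "\<not> (antilex_less lt pi n x y \<and> antilex_less lt pi n y x)"
proof
  assume "antilex_less lt pi n x y \<and> antilex_less lt pi n y x"
  then obtain s1 s2 where s1: "s1 < n" "\<forall>t. s1 < t \<and> t < n \<longrightarrow> x ! (pi t) = y ! (pi t)" "(x ! (pi s1), y ! (pi s1)) \<in> lt"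
    and s2: "s2 < n" "\<forall>t. s2 < t \<and> t < n \<longrightarrow> y ! (pi t) = x ! (pi t)" "(y ! (pi s2), x ! (pi s2)) \<in> lt"
    unfolding antilex_less_def by blast
  have irr: "\<And>a. (a,a) \<notin> lt" and tr: "trans lt" using lt unfolding strict_linear_order_on_def irrefl_def by auto
  consider "s1 < s2" | "s1 = s2" | "s2 < s1" by linarith
  then show False
  proof cases
    case 1 then have "x ! (pi s2) = y ! (pi s2)" using s1(2) s2(1) by blast
    then show ?thesis using s2(3) irr by simp
  next
    case 2 then have "(x ! (pi s1), x ! (pi s1)) \<in> lt" using s1(3) s2(3) tr by (metis transD)
    then show ?thesis using irr by simp
  next
    case 3 then have "y ! (pi s1) = x ! (pi s1)" using s2(2) s1(1) by blast
    then show ?thesis using s1(3) irr by simp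
  qed
qed

lemma antilex_trans:
  assumes lt: "strict_linear_order_on B lt"
    and xy: "antilex_less lt pi n x y" and yz: "antilex_less lt pi n y z"
  shows "antilex_less lt pi n x z"
proof -
  obtain s1 s2 where s1: "s1 < n" "\<forall>t. s1 < t \<and> t < n \<longrightarrow> x ! (pi t) = y ! (pi t)" "(x ! (pi s1), y ! (pi s1)) \<in> lt"
    and s2: "s2 < n" "\<forall>t. s2 < t \<and> t < n \<longrightarrow> y ! (pi t) = z ! (pi t)" "(y ! (pi s2), z ! (pi s2)) \<in> lt"
    using xy yz unfolding antilex_less_def by blast
  have tr: "trans lt" using lt unfolding strict_linear_order_on_def by auto
  consider "s1 < s2" | "s1 = s2" | "s2 < s1" by linarith
  then show ?thesis
  proof cases
    case 1
    have "x ! (pi s2) = y ! (pi s2)" using s1(2) s2(1) 1 by blast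
    then have "(x ! (pi s2), z ! (pi s2)) \<in> lt" using s2(3) by simp
    moreover have "\<forall>t. s2 < t \<and> t < n \<longrightarrow> x ! (pi t) = z ! (pi t)" using s1(2) s2(2) 1 by force
    ultimately show ?thesis unfolding antilex_less_def using s2(1) by blast
  next
    case 2
    have "(x ! (pi s2), z ! (pi s2)) \<in> lt" using s1(3) s2(3) tr 2 by (metis transD)
    moreover have "\<forall>t. s2 < t \<and> t < n \<longrightarrow> x ! (pi t) = z ! (pi t)" using s1(2) s2(2) 2 by force
    ultimately show ?thesis unfolding antilex_less_def using s2(1) by blast
  next
    case 3
    have "y ! (pi s1) = z ! (pi s1)" using s2(2) s1(1) 3 by blast
    then have "(x ! (pi s1), z ! (pi s1)) \<in> lt" using s1(3) by simp
    moreover have "\<forall>t. s1 < t \<and> t < n \<longrightarrow> x ! (pi t) = z ! (pi t)" using s1(2) s2(2) 3 by force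
    ultimately show ?thesis unfolding antilex_less_def using s1(1) by blast
  qed
qed

lemma antilex_total:
  assumes lt: "strict_linear_order_on (fst A) lt" and pi: "bij_betw pi {..<n} {..<n}"
    and x: "x \<in> pow_carrier A n" and y: "y \<in> pow_carrier A n" and ne: "x \<noteq> y"
  shows "antilex_less lt pi n x y \<or> antilex_less lt pi n y x"
proof -
  have lx: "length x = n" "length y = n" using x y unfolding pow_carrier_def by auto
  have "\<exists>i<n. x ! i \<noteq> y ! i"
  proof (rule ccontr)
    assume "\<not> (\<exists>i<n. x ! i \<noteq> y ! i)"
    then have "x = y" using lx by (intro nth_equalityI) auto
    then show False using ne by simp
  qed
  then obtain i where i: "i < n" "x ! i \<noteq> y ! i" by blast
  have "i \<in> pi ` {..<n}" using pi i(1) unfolding bij_betw_def by simp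
  then obtain s0 where s0: "s0 < n" "pi s0 = i" by auto
  define D where "D = {s. s < n \<and> x ! (pi s) \<noteq> y ! (pi s)}"
  have "s0 \<in> D" using s0 i unfolding D_def by auto
  moreover have fD: "finite D" unfolding D_def by auto
  ultimately have sD: "Max D \<in> D" using Max_in by blast
  define s where "s = Max D"
  have above: "\<forall>t. s < t \<and> t < n \<longrightarrow> x ! (pi t) = y ! (pi t)"
  proof (intro allI impI)
    fix t assume t: "s < t \<and> t < n"
    show "x ! (pi t) = y ! (pi t)"
    proof (rule ccontr)
      assume "x ! (pi t) \<noteq> y ! (pi t)"
      then have "t \<in> D" using t unfolding D_def by auto
      then have "t \<le> s" unfolding s_def using Max_ge[OF fD] by blast
      then show False using t by simp
    qed
  qed
  have sn: "s < n" and ne2: "x ! (pi s) \<noteq> y ! (pi s)" using sD unfolding s_def D_def by auto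
  have "pi s < n" using pi sn unfolding bij_betw_def by auto
  then have "x ! (pi s) \<in> fst A" "y ! (pi s) \<in> fst A" using x y lx unfolding pow_carrier_def by auto
  then have "(x ! (pi s), y ! (pi s)) \<in> lt \<or> (y ! (pi s), x ! (pi s)) \<in> lt"
    using lt ne2 unfolding strict_linear_order_on_def total_on_def by blast
  then show ?thesis
  proof
    assume "(x ! (pi s), y ! (pi s)) \<in> lt"
    then have "antilex_less lt pi n x y" unfolding antilex_less_def using sn above by blast
    then show ?thesis ..
  next
    assume "(y ! (pi s), x ! (pi s)) \<in> lt"
    moreover have "\<forall>t. s < t \<and> t < n \<longrightarrow> y ! (pi t) = x ! (pi t)" using above by simp
    ultimately have "antilex_less lt pi n y x" unfolding antilex_less_def using sn by blast
    then show ?thesis ..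
  qed
qed

lemma antilex_linear:
  assumes lt: "strict_linear_order_on (fst A) lt" and pi: "bij_betw pi {..<n} {..<n}"
  shows "linear_on (pow_carrier A n) (antilex_le lt pi n)"
proof -
  have r: "\<forall>x. antilex_le lt pi n x x" unfolding antilex_le_def by simp
  have a: "\<forall>x y. antilex_le lt pi n x y \<and> antilex_le lt pi n y x \<longrightarrow> x = y"
    unfolding antilex_le_def using antilex_antisym[OF lt] by blast
  have t: "\<forall>x y z. antilex_le lt pi n x y \<and> antilex_le lt pi n y z \<longrightarrow> antilex_le lt pi n x z"
    unfolding antilex_le_def using antilex_trans[OF lt] by blast
  have c: "\<forall>x\<in>pow_carrier A n. \<forall>y\<in>pow_carrier A n. antilex_le lt pi n x y \<or> antilex_le lt pi n y x"
    unfolding antilex_le_def using antilex_total[OF lt pi] by blast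
  show ?thesis unfolding linear_on_def using r a t c by blast
qed



lemma eval_pow_closed:
  assumes "alg ar A"
  shows "wf_trm ar t \<Longrightarrow> (\<And>j. j \<in> vars t \<Longrightarrow> env j \<in> pow_carrier A m) \<Longrightarrow> eval (pow_ops A m) env t \<in> pow_carrier A m"
proof (induction t)
  case (Var x) then show ?case by simp
next
  case (App g ts)
  have "set (map (eval (pow_ops A m) env) ts) \<subseteq> pow_carrier A m" using App by auto
  then show ?case using pow_ops_closed[OF assms] App.prems by simp
qed

lemma psi_term:
  assumes algA: "alg ar A"
    and hom: "\<forall>g us. length us = ar g \<and> set us \<subseteq> pow_carrier A m \<longrightarrow> psi (pow_ops A m g us) = snd A g (map psi us)"
  shows "wf_trm ar t \<Longrightarrow> (\<And>j. j \<in> vars t \<Longrightarrow> env j \<in> pow_carrier A m) \<Longrightarrow>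
     psi (eval (pow_ops A m) env t) = eval (snd A) (\<lambda>j. psi (env j)) t"
proof (induction t)
  case (Var x) then show ?case by simp
next
  case (App g ts)
  have s: "set (map (eval (pow_ops A m) env) ts) \<subseteq> pow_carrier A m"
    using App.prems by (auto intro!: eval_pow_closed[OF algA])
  have "psi (eval (pow_ops A m) env (App g ts)) = psi (pow_ops A m g (map (eval (pow_ops A m) env) ts))"
    by simp
  also have "\<dots> = snd A g (map psi (map (eval (pow_ops A m) env) ts))"
    using hom s App.prems by simp
  also have "map psi (map (eval (pow_ops A m) env) ts) = map (eval (snd A) (\<lambda>j. psi (env j))) ts"
    using App by auto
  finally show ?case by simp
qed

lemma prim_facts:
  assumes "primal ar A"
  shows "alg ar A" "finite (fst A)" "\<exists>a b. a \<in> fst A \<and> b \<in> fst A \<and> a \<noteq> b"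
proof -
  have h: "alg ar A" "finite (fst A)" "card (fst A) \<ge> 2" using assms unfolding primal_def by blast+
  show "alg ar A" "finite (fst A)" using h by blast+
  show "\<exists>a b. a \<in> fst A \<and> b \<in> fst A \<and> a \<noteq> b"
    using h(2,3) by (metis card_le_Suc0_iff_eq not_less_eq_eq numeral_2_eq_2)
qed

lemma prim_term':
  assumes "primal ar A" "m \<ge> 1" "\<And>xs. length xs = m \<Longrightarrow> set xs \<subseteq> fst A \<Longrightarrow> P xs \<in> fst A"
  shows "\<exists>t. wf_trm ar t \<and> vars t \<subseteq> {..<m} \<and>
           (\<forall>xs. length xs = m \<and> set xs \<subseteq> fst A \<longrightarrow> eval (snd A) (\<lambda>i. xs ! i) t = P xs)"
  by (rule prim_term_gen[OF assms])

lemma hom_proj: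
  assumes prim: "primal ar A"
    and psiA: "\<forall>u\<in>pow_carrier A m. psi u \<in> fst A"
    and hom: "\<forall>g us. length us = ar g \<and> set us \<subseteq> pow_carrier A m \<longrightarrow> psi (pow_ops A m g us) = snd A g (map psi us)"
  shows "\<exists>r<m. \<forall>u\<in>pow_carrier A m. psi u = u ! r"
proof (rule ccontr)
  assume nproj: "\<not> (\<exists>r<m. \<forall>u\<in>pow_carrier A m. psi u = u ! r)"
  note pf = prim_facts[OF prim]
  obtain a b0 where ab0: "a \<in> fst A" "b0 \<in> fst A" "a \<noteq> b0" using pf(3) by blast
  have repa: "replicate m a \<in> pow_carrier A m" using ab0 unfolding pow_carrier_def by auto
  define c0 where "c0 = psi (replicate m a)"
  have c0: "c0 \<in> fst A" using psiA repa unfolding c0_def by blast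
  obtain b where b: "b \<in> fst A" "b \<noteq> c0" using ab0 by (metis)
  obtain ws where ws: "set ws = pow_carrier A m" using finite_list[OF pow_carrier_finite[OF pf(2)]] by blast
  define K where "K = length ws"
  have K: "K \<ge> 1" using repa ws unfolding K_def by (cases ws) auto
  have wsP: "\<And>j. j < K \<Longrightarrow> ws ! j \<in> pow_carrier A m" using ws unfolding K_def by auto
  define colpsi where "colpsi = map (\<lambda>j. psi (ws ! j)) [0..<K]"
  define col where "col = (\<lambda>r. map (\<lambda>j. ws ! j ! r) [0..<K])"
  have cne: "col r \<noteq> colpsi" if r: "r < m" for r
  proof -
    obtain u where u: "u \<in> pow_carrier A m" "psi u \<noteq> u ! r" using nproj r by blast
    then obtain j where j: "j < K" "ws ! j = u" using ws unfolding K_def by (metis in_set_conv_nth)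
    have "col r ! j \<noteq> colpsi ! j" using j u unfolding col_def colpsi_def by simp
    then show ?thesis by metis
  qed
  define P where "P = (\<lambda>c. if c = colpsi then b else a)"
  obtain tP where tP: "wf_trm ar tP" "vars tP \<subseteq> {..<K}"
     "\<forall>xs. length xs = K \<and> set xs \<subseteq> fst A \<longrightarrow> eval (snd A) (\<lambda>i. xs ! i) tP = P xs"
  proof -
    have "\<exists>t. wf_trm ar t \<and> vars t \<subseteq> {..<K} \<and>
           (\<forall>xs. length xs = K \<and> set xs \<subseteq> fst A \<longrightarrow> eval (snd A) (\<lambda>i. xs ! i) t = P xs)"
      by (rule prim_term'[OF prim K]) (use ab0 b in \<open>auto simp: P_def\<close>)
    then show ?thesis using that by blast
  qed
  define env where "env = (\<lambda>j. ws ! j)"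
  have envP: "\<And>j. j \<in> vars tP \<Longrightarrow> env j \<in> pow_carrier A m" using tP(2) wsP unfolding env_def by auto
  have colA: "set (col k) \<subseteq> fst A" if "k < m" for k
    using wsP that unfolding col_def pow_carrier_def by (auto simp: subset_iff)
  have "eval (pow_ops A m) env tP = map (\<lambda>k. eval (snd A) (\<lambda>j. env j ! k) tP) [0..<m]"
    using eval_pow[OF pf(1) tP(1) envP] .
  also have "\<dots> = map (\<lambda>k. a) [0..<m]"
  proof (rule map_cong[OF refl])
    fix k assume "k \<in> set [0..<m]"
    then have k: "k < m" by simp
    have "eval (snd A) (\<lambda>j. env j ! k) tP = eval (snd A) (\<lambda>i. col k ! i) tP"
      by (rule eval_cong) (use tP(2) in \<open>auto simp: col_def env_def\<close>)
    also have "\<dots> = P (col k)" using tP(3) colA[OF k] by (simp add: col_def)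
    also have "\<dots> = a" using cne[OF k] unfolding P_def by simp
    finally show "eval (snd A) (\<lambda>j. env j ! k) tP = a" .
  qed
  also have "\<dots> = replicate m a" by (simp add: map_replicate_const)
  finally have ev: "eval (pow_ops A m) env tP = replicate m a" .
  have "psi (eval (pow_ops A m) env tP) = eval (snd A) (\<lambda>j. psi (env j)) tP"
    using psi_term[OF pf(1) hom tP(1) envP] .
  also have "\<dots> = eval (snd A) (\<lambda>i. colpsi ! i) tP"
    by (rule eval_cong) (use tP(2) in \<open>auto simp: colpsi_def env_def\<close>)
  also have "\<dots> = P colpsi"
    by (rule tP(3)[rule_format]) (use psiA wsP in \<open>auto simp: colpsi_def\<close>)
  also have "\<dots> = b" unfolding P_def by simp
  finally show False using ev b unfolding c0_def by simp
qed



lemma order_transfer: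
  assumes lt: "strict_linear_order_on B lt"
    and pi: "bij_betw pi {..<m} {..<m}"
    and sig: "\<forall>j<n. \<sigma> j < m"
    and rho: "\<forall>r<m. \<rho> r < n \<and> \<sigma> (\<rho> r) = r"
    and L: "L = filter (\<lambda>j. j \<notin> \<rho> ` {..<m}) [0..<n] @ map (\<lambda>s. \<rho> (pi s)) [0..<m]"
  shows "bij_betw ((!) L) {..<n} {..<n}"
    and "\<And>u v. length u = m \<Longrightarrow> length v = m \<Longrightarrow> antilex_le lt pi m u v \<longleftrightarrow>
            antilex_le lt ((!) L) n (map (\<lambda>j. u ! \<sigma> j) [0..<n]) (map (\<lambda>j. v ! \<sigma> j) [0..<n])"
proof -
  define NR where "NR = filter (\<lambda>j. j \<notin> \<rho> ` {..<m}) [0..<n]"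
  have L': "L = NR @ map (\<lambda>s. \<rho> (pi s)) [0..<m]" using L NR_def by simp
  have pim: "\<And>s. s < m \<Longrightarrow> pi s < m" using pi unfolding bij_betw_def by auto
  have pisurj: "\<And>r. r < m \<Longrightarrow> \<exists>s<m. pi s = r"
  proof -
    fix r assume "r < m"
    then have "r \<in> pi ` {..<m}" using pi unfolding bij_betw_def by simp
    then show "\<exists>s<m. pi s = r" by auto
  qed
  have piinj: "inj_on pi {..<m}" using pi unfolding bij_betw_def by simp
  have rhoinj: "inj_on \<rho> {..<m}"
  proof (rule inj_onI)
    fix r1 r2 assume "r1 \<in> {..<m}" "r2 \<in> {..<m}" "\<rho> r1 = \<rho> r2"
    then show "r1 = r2" using rho by (metis lessThan_iff)
  qed
  have inj2: "inj_on (\<lambda>s. \<rho> (pi s)) {..<m}"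
  proof (rule inj_onI)
    fix s1 s2 assume s: "s1 \<in> {..<m}" "s2 \<in> {..<m}" "\<rho> (pi s1) = \<rho> (pi s2)"
    then have "pi s1 = pi s2" using rhoinj pim by (auto dest: inj_onD)
    then show "s1 = s2" using piinj s by (auto dest: inj_onD)
  qed
  have dL: "distinct L" unfolding L'
  proof (subst distinct_append, intro conjI)
    show "distinct NR" unfolding NR_def by simp
    show "distinct (map (\<lambda>s. \<rho> (pi s)) [0..<m])" using inj2 by (simp add: distinct_map atLeast0LessThan)
    show "set NR \<inter> set (map (\<lambda>s. \<rho> (pi s)) [0..<m]) = {}" unfolding NR_def using pim by auto
  qed
  have sL: "set L = {..<n}"
  proof
    show "set L \<subseteq> {..<n}" unfolding L' NR_def using rho pim by auto
    show "{..<n} \<subseteq> set L"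
    proof
      fix j assume j: "j \<in> {..<n}"
      show "j \<in> set L"
      proof (cases "j \<in> \<rho> ` {..<m}")
        case True
        then obtain r where r: "r < m" "j = \<rho> r" by auto
        obtain s where "s < m" "pi s = r" using pisurj r(1) by blast
        then show ?thesis unfolding L' using r by auto
      next
        case False then show ?thesis unfolding L' NR_def using j by auto
      qed
    qed
  qed
  have lenL: "length L = n" using distinct_card[OF dL] sL by simp
  show "bij_betw ((!) L) {..<n} {..<n}" using bij_betw_nth[OF dL] lenL sL by simp
  define q where "q = length NR"
  have nq: "n = q + m" using lenL unfolding L' q_def by simp
  have Lq: "\<And>s. s < m \<Longrightarrow> L ! (q + s) = \<rho> (pi s)" unfolding L' q_def by (simp add: nth_append)
  fix u v :: "'a list" assume lu: "length u = m" and lv: "length v = m"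
  define U where "U = map (\<lambda>j. u ! \<sigma> j) [0..<n]"
  define V where "V = map (\<lambda>j. v ! \<sigma> j) [0..<n]"
  have UL: "U ! (L ! (q + s)) = u ! (pi s)" "V ! (L ! (q + s)) = v ! (pi s)" if s: "s < m" for s
  proof -
    have "\<rho> (pi s) < n" "\<sigma> (\<rho> (pi s)) = pi s" using rho pim[OF s] by auto
    then show "U ! (L ! (q + s)) = u ! (pi s)" "V ! (L ! (q + s)) = v ! (pi s)"
      unfolding U_def V_def using Lq[OF s] by auto
  qed
  have eqiff: "u = v \<longleftrightarrow> U = V"
  proof
    assume "U = V"
    show "u = v"
    proof (rule nth_equalityI)
      show "length u = length v" using lu lv by simp
      fix r assume "r < length u"
      then have r: "r < m" using lu by simp
      have "u ! r = U ! (\<rho> r)" "v ! r = V ! (\<rho> r)" using rho r unfolding U_def V_def by auto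
      then show "u ! r = v ! r" using \<open>U = V\<close> by simp
    qed
  qed (simp add: U_def V_def)
  have irr: "\<And>x. (x, x) \<notin> lt" using lt unfolding strict_linear_order_on_def irrefl_def by auto
  have lessiff: "antilex_less lt pi m u v \<longleftrightarrow> antilex_less lt ((!) L) n U V"
  proof
    assume "antilex_less lt pi m u v"
    then obtain s where s: "s < m" "\<forall>t. s < t \<and> t < m \<longrightarrow> u ! (pi t) = v ! (pi t)" "(u ! (pi s), v ! (pi s)) \<in> lt"
      unfolding antilex_less_def by blast
    have "\<forall>t. q + s < t \<and> t < n \<longrightarrow> U ! (L ! t) = V ! (L ! t)"
    proof (intro allI impI)
      fix t assume t: "q + s < t \<and> t < n"
      then have t': "t = q + (t - q)" "t - q < m" "s < t - q" using nq by auto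
      then show "U ! (L ! t) = V ! (L ! t)" using UL[OF t'(2)] s(2) by metis
    qed
    moreover have "(U ! (L ! (q + s)), V ! (L ! (q + s))) \<in> lt" using UL[OF s(1)] s(3) by simp
    ultimately show "antilex_less lt ((!) L) n U V" unfolding antilex_less_def using s(1) nq
      by (intro exI[of _ "q + s"]) auto
  next
    assume "antilex_less lt ((!) L) n U V"
    then obtain s' where s': "s' < n" "\<forall>t. s' < t \<and> t < n \<longrightarrow> U ! (L ! t) = V ! (L ! t)" "(U ! (L ! s'), V ! (L ! s')) \<in> lt"
      unfolding antilex_less_def by blast
    show "antilex_less lt pi m u v"
    proof (cases "s' < q")
      case True
      have "u = v"
      proof (rule nth_equalityI)
        show "length u = length v" using lu lv by simp
        fix r assume "r < length u"
        then obtain t where t: "t < m" "pi t = r" using pisurj lu by auto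
        have "U ! (L ! (q + t)) = V ! (L ! (q + t))" using s'(2) True t(1) nq by auto
        then show "u ! r = v ! r" using UL[OF t(1)] t(2) by simp
      qed
      then have "U = V" using eqiff by simp
      then show ?thesis using s'(3) irr by simp
    next
      case False
      define s where "s = s' - q"
      have ss: "s < m" "s' = q + s" using False s'(1) nq unfolding s_def by auto
      have "\<forall>t. s < t \<and> t < m \<longrightarrow> u ! (pi t) = v ! (pi t)"
      proof (intro allI impI)
        fix t assume t: "s < t \<and> t < m"
        then have "U ! (L ! (q + t)) = V ! (L ! (q + t))" using s'(2) ss nq by auto
        then show "u ! (pi t) = v ! (pi t)" using UL t by simp
      qed
      moreover have "(u ! (pi s), v ! (pi s)) \<in> lt" using s'(3) UL[OF ss(1)] ss(2) by simp
      ultimately show ?thesis unfolding antilex_less_def using ss(1) by blast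
    qed
  qed
  show "antilex_le lt pi m u v \<longleftrightarrow> antilex_le lt ((!) L) n U V"
    unfolding antilex_le_def using eqiff lessiff by simp
qed



lemma linear_transfer:
  assumes h: "bij_betw h S T" and lin: "linear_on T R"
    and le: "\<forall>x\<in>S. \<forall>y\<in>S. le x y \<longleftrightarrow> R (h x) (h y)"
  shows "linear_on S le"
proof -
  have hT: "\<And>x. x \<in> S \<Longrightarrow> h x \<in> T" using h unfolding bij_betw_def by auto
  have inj: "inj_on h S" using h unfolding bij_betw_def by simp
  show ?thesis unfolding linear_on_def
  proof (intro conjI ballI impI)
    fix x assume "x \<in> S" then show "le x x" using le lin hT unfolding linear_on_def by auto
  next
    fix x y assume xy: "x \<in> S" "y \<in> S" "le x y \<and> le y x"
    then have "h x = h y" using le lin hT unfolding linear_on_def by meson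
    then show "x = y" using inj xy by (auto dest: inj_onD)
  next
    fix x y z assume xyz: "x \<in> S" "y \<in> S" "z \<in> S" "le x y \<and> le y z"
    then have "R (h x) (h y)" "R (h y) (h z)" using le by auto
    then have "R (h x) (h z)" using lin hT xyz(1-3) unfolding linear_on_def by meson
    then show "le x z" using le xyz by auto
  next
    fix x y assume xy: "x \<in> S" "y \<in> S"
    then have "R (h x) (h y) \<or> R (h y) (h x)" using lin hT unfolding linear_on_def by meson
    then show "le x y \<or> le y x" using le xy by auto
  qed
qed

lemma hom_term:
  assumes algX: "alg ar X"
    and hom: "\<forall>g xs. length xs = ar g \<and> set xs \<subseteq> fst X \<longrightarrow> h (snd X g xs) = pow_ops A n g (map h xs)"
  shows "wf_trm ar t \<Longrightarrow> (\<And>j. j \<in> vars t \<Longrightarrow> env j \<in> fst X) \<Longrightarrow>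
     h (eval (snd X) env t) = eval (pow_ops A n) (\<lambda>j. h (env j)) t"
proof (induction t)
  case (Var x) then show ?case by simp
next
  case (App g ts)
  have s: "set (map (eval (snd X) env) ts) \<subseteq> fst X"
    using App.prems by (auto intro!: eval_closed[OF algX])
  have "h (eval (snd X) env (App g ts)) = h (snd X g (map (eval (snd X) env) ts))" by simp
  also have "\<dots> = pow_ops A n g (map h (map (eval (snd X) env) ts))"
    using hom s App.prems by simp
  also have "map h (map (eval (snd X) env) ts) = map (eval (pow_ops A n) (\<lambda>j. h (env j))) ts"
    using App by auto
  finally show ?case by simp
qed

lemma ov_vfin:
  assumes prim: "primal ar A" and algX: "alg ar X"
    and h: "bij_betw h (fst X) (pow_carrier A n)"
    and hom: "\<forall>g xs. length xs = ar g \<and> set xs \<subseteq> fst X \<longrightarrow> h (snd X g xs) = pow_ops A n g (map h xs)"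
  shows "Vfin ar A X"
proof -
  note pf = prim_facts[OF prim]
  have finX: "finite (fst X)" using h pow_carrier_finite[OF pf(2)] bij_betw_finite by blast
  have hP: "\<And>x. x \<in> fst X \<Longrightarrow> h x \<in> pow_carrier A n" using h unfolding bij_betw_def by auto
  have inj: "inj_on h (fst X)" using h unfolding bij_betw_def by simp
  have ids: "holds X s t" if st: "wf_trm ar s" "wf_trm ar t" "holds A s t" for s t
    unfolding holds_def
  proof (intro allI impI)
    fix env :: "nat \<Rightarrow> _" assume env: "range env \<subseteq> fst X"
    have envX: "\<And>j. env j \<in> fst X" using env by auto
    have comp: "h (eval (snd X) env u) = map (\<lambda>k. eval (snd A) (\<lambda>j. h (env j) ! k) u) [0..<n]"
      if "wf_trm ar u" for u
      using hom_term[OF algX hom that envX] eval_pow[OF pf(1) that, of "\<lambda>j. h (env j)" n] hP envX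
      by simp
    have "\<forall>k<n. eval (snd A) (\<lambda>j. h (env j) ! k) s = eval (snd A) (\<lambda>j. h (env j) ! k) t"
    proof (intro allI impI)
      fix k assume k: "k < n"
      have "range (\<lambda>j. h (env j) ! k) \<subseteq> fst A"
        using hP envX k unfolding pow_carrier_def by (auto intro!: nth_mem[THEN subsetD[rotated]])
      then show "eval (snd A) (\<lambda>j. h (env j) ! k) s = eval (snd A) (\<lambda>j. h (env j) ! k) t"
        using st(3) unfolding holds_def by blast
    qed
    then have "h (eval (snd X) env s) = h (eval (snd X) env t)" using comp st(1,2) by simp
    moreover have "eval (snd X) env s \<in> fst X" "eval (snd X) env t \<in> fst X"
      using eval_closed[OF algX] st envX by auto
    ultimately show "eval (snd X) env s = eval (snd X) env t" using inj by (auto dest: inj_onD)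
  qed
  show ?thesis unfolding Vfin_def using algX finX ids by blast
qed



lemma reasonable_step:
  assumes prim: "primal ar A" and lt: "strict_linear_order_on (fst A) lt"
    and algX: "alg ar X"
    and emb: "alg_emb ar h X Y"
    and pi: "bij_betw pi {..<m} {..<m}"
    and hX: "bij_betw hX (fst X) (pow_carrier A m)"
    and hXhom: "\<forall>g xs. length xs = ar g \<and> set xs \<subseteq> fst X \<longrightarrow> hX (snd X g xs) = pow_ops A m g (map hX xs)"
    and hY: "bij_betw hY (fst Y) (pow_carrier A n)"
    and hYhom: "\<forall>g xs. length xs = ar g \<and> set xs \<subseteq> fst Y \<longrightarrow> hY (snd Y g xs) = pow_ops A n g (map hY xs)"
  shows "\<exists>pi'. bij_betw pi' {..<n} {..<n} \<and> (\<forall>x1\<in>fst X. \<forall>x2\<in>fst X.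
     antilex_le lt pi m (hX x1) (hX x2) \<longleftrightarrow> antilex_le lt pi' n (hY (h x1)) (hY (h x2)))"
proof -
  note pf = prim_facts[OF prim]
  define iX where "iX = inv_into (fst X) hX"
  have iX: "iX u \<in> fst X \<and> hX (iX u) = u" if "u \<in> pow_carrier A m" for u
    using hX that unfolding iX_def bij_betw_def by (auto intro: inv_into_into f_inv_into_f)
  have iXhX: "\<And>x. x \<in> fst X \<Longrightarrow> iX (hX x) = x"
    using hX unfolding iX_def bij_betw_def by (simp add: inv_into_f_f)
  have hXP: "\<And>x. x \<in> fst X \<Longrightarrow> hX x \<in> pow_carrier A m" using hX unfolding bij_betw_def by auto
  have hfY: "\<And>x. x \<in> fst X \<Longrightarrow> h x \<in> fst Y" using emb unfolding alg_emb_def by auto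
  have hinj: "inj_on h (fst X)" using emb unfolding alg_emb_def by auto
  have hhom: "\<forall>g xs. length xs = ar g \<and> set xs \<subseteq> fst X \<longrightarrow> h (snd X g xs) = snd Y g (map h xs)"
    using emb unfolding alg_emb_def by auto
  have hYP: "\<And>y. y \<in> fst Y \<Longrightarrow> hY y \<in> pow_carrier A n" using hY unfolding bij_betw_def by auto
  have hYinj: "inj_on hY (fst Y)" using hY unfolding bij_betw_def by auto
  define phi where "phi = (\<lambda>u. hY (h (iX u)))"
  have phiP: "\<And>u. u \<in> pow_carrier A m \<Longrightarrow> phi u \<in> pow_carrier A n"
    unfolding phi_def using iX hfY hYP by auto
  have phihom: "phi (pow_ops A m g us) = pow_ops A n g (map phi us)"
    if us: "length us = ar g" "set us \<subseteq> pow_carrier A m" for g us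
  proof -
    have xs: "set (map iX us) \<subseteq> fst X" using iX us by auto
    have z: "snd X g (map iX us) \<in> fst X" using algX us xs unfolding alg_def by auto
    have "hX (snd X g (map iX us)) = pow_ops A m g (map hX (map iX us))" using hXhom us xs by simp
    also have "map hX (map iX us) = us" unfolding map_map by (rule map_idI) (use iX us in auto)
    finally have "iX (pow_ops A m g us) = snd X g (map iX us)" using iXhX[OF z] by simp
    then have "phi (pow_ops A m g us) = hY (h (snd X g (map iX us)))" unfolding phi_def by simp
    also have "\<dots> = hY (snd Y g (map h (map iX us)))" using hhom us xs by simp
    also have "\<dots> = pow_ops A n g (map hY (map h (map iX us)))"
    proof -
      have ys: "set (map h (map iX us)) \<subseteq> fst Y" using xs hfY by auto
      show ?thesis by (rule hYhom[rule_format]) (use ys us in simp)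
    qed
    also have "\<dots> = pow_ops A n g (map phi us)" by (simp add: phi_def o_def)
    finally show ?thesis .
  qed
  have phiinj: "inj_on phi (pow_carrier A m)"
  proof (rule inj_onI)
    fix u v assume uv: "u \<in> pow_carrier A m" "v \<in> pow_carrier A m" "phi u = phi v"
    then have "h (iX u) = h (iX v)" using hYinj hfY iX unfolding phi_def by (auto dest: inj_onD)
    then have "iX u = iX v" using hinj iX uv by (auto dest: inj_onD)
    then show "u = v" using iX uv by metis
  qed
  have proj: "\<exists>r<m. \<forall>u\<in>pow_carrier A m. phi u ! j = u ! r" if j: "j < n" for j
  proof (rule hom_proj[OF prim])
    show "\<forall>u\<in>pow_carrier A m. phi u ! j \<in> fst A"
      using phiP j unfolding pow_carrier_def by (auto intro!: nth_mem[THEN subsetD[rotated]])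
    show "\<forall>g us. length us = ar g \<and> set us \<subseteq> pow_carrier A m \<longrightarrow>
        phi (pow_ops A m g us) ! j = snd A g (map (\<lambda>u. phi u ! j) us)"
      using phihom j by (simp add: pow_ops_def o_def)
  qed
  define \<sigma> where "\<sigma> = (\<lambda>j. SOME r. r < m \<and> (\<forall>u\<in>pow_carrier A m. phi u ! j = u ! r))"
  have sigall: "\<sigma> j < m \<and> (\<forall>u\<in>pow_carrier A m. phi u ! j = u ! \<sigma> j)" if "j < n" for j
    unfolding \<sigma>_def using proj[OF that] by (rule someI_ex)
  have sig: "\<forall>j<n. \<sigma> j < m" using sigall by blast
  have phimap: "phi u = map (\<lambda>j. u ! \<sigma> j) [0..<n]" if u: "u \<in> pow_carrier A m" for u
  proof (rule nth_equalityI)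
    show "length (phi u) = length (map (\<lambda>j. u ! \<sigma> j) [0..<n])"
      using phiP[OF u] unfolding pow_carrier_def by simp
    fix j assume "j < length (phi u)"
    then have j: "j < n" using phiP[OF u] unfolding pow_carrier_def by simp
    then show "phi u ! j = map (\<lambda>j. u ! \<sigma> j) [0..<n] ! j" using sigall u by simp
  qed
  have sigsurj: "\<exists>j<n. \<sigma> j = r" if r: "r < m" for r
  proof (rule ccontr)
    assume nj: "\<not> (\<exists>j<n. \<sigma> j = r)"
    obtain a b where ab: "a \<in> fst A" "b \<in> fst A" "a \<noteq> b" using pf(3) by blast
    define u where "u = replicate m a"
    define v where "v = (replicate m a)[r := b]"
    have uP: "u \<in> pow_carrier A m" using ab unfolding u_def pow_carrier_def by auto
    have vP: "v \<in> pow_carrier A m" using ab unfolding v_def pow_carrier_def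
      by (auto dest: set_update_subset_insert[THEN subsetD])
    have "map (\<lambda>j. u ! \<sigma> j) [0..<n] = map (\<lambda>j. v ! \<sigma> j) [0..<n]"
    proof (rule map_cong[OF refl])
      fix j assume "j \<in> set [0..<n]"
      then have j: "j < n" by simp
      then have "\<sigma> j \<noteq> r" "\<sigma> j < m" using nj sig by auto
      then show "u ! \<sigma> j = v ! \<sigma> j" unfolding u_def v_def by simp
    qed
    then have "phi u = phi v" using phimap uP vP by simp
    then have "u = v" using phiinj uP vP by (auto dest: inj_onD)
    moreover have "u ! r \<noteq> v ! r" using r ab unfolding u_def v_def by simp
    ultimately show False by simp
  qed
  define \<rho> where "\<rho> = (\<lambda>r. SOME j. j < n \<and> \<sigma> j = r)"
  have rho: "\<forall>r<m. \<rho> r < n \<and> \<sigma> (\<rho> r) = r"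
  proof (intro allI impI)
    fix r assume "r < m"
    then have "\<exists>j. j < n \<and> \<sigma> j = r" using sigsurj by blast
    then show "\<rho> r < n \<and> \<sigma> (\<rho> r) = r" unfolding \<rho>_def by (rule someI_ex)
  qed
  define L where "L = filter (\<lambda>j. j \<notin> \<rho> ` {..<m}) [0..<n] @ map (\<lambda>s. \<rho> (pi s)) [0..<m]"
  note OT = order_transfer[OF lt pi sig rho L_def]
  show ?thesis
  proof (intro exI[of _ "(!) L"] conjI ballI)
    show "bij_betw ((!) L) {..<n} {..<n}" by (rule OT(1))
    fix x1 x2 assume x: "x1 \<in> fst X" "x2 \<in> fst X"
    have e: "hY (h x) = map (\<lambda>j. hX x ! \<sigma> j) [0..<n]" if "x \<in> fst X" for x
      using phimap[OF hXP[OF that]] iXhX[OF that] unfolding phi_def by simp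
    have l: "length (hX x1) = m" "length (hX x2) = m" using hXP x unfolding pow_carrier_def by auto
    show "antilex_le lt pi m (hX x1) (hX x2) \<longleftrightarrow> antilex_le lt ((!) L) n (hY (h x1)) (hY (h x2))"
      unfolding e[OF x(1)] e[OF x(2)] by (rule OT(2)[OF l])
  qed
qed

theorem lemma7p4:
  fixes ar :: "'f \<Rightarrow> nat" and A :: "('a,'f) alg" and lt :: "('a \<times> 'a) set"
  assumes "primal ar A"
    and "strict_linear_order_on (fst A) lt"
  shows "order_expansion (Vfin ar A :: ('b,'f) alg \<Rightarrow> bool) (OVfin ar A lt)
       \<and> reasonable ar (Vfin ar A :: ('b,'f) alg \<Rightarrow> bool) (Vfin ar A :: ('c,'f) alg \<Rightarrow> bool)
           (OVfin ar A lt) (OVfin ar A lt)"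
proof
  note prim = assms(1) and lt = assms(2)
  note pf = prim_facts[OF prim]
  show "order_expansion (Vfin ar A :: ('b,'f) alg \<Rightarrow> bool) (OVfin ar A lt)"
    unfolding order_expansion_def
  proof (rule conjI; intro allI impI)
    fix X :: "('b,'f) alg" and le assume "OVfin ar A lt (X, le)"
    then obtain n pi h where algX: "alg ar X" and pi: "bij_betw pi {..<n} {..<n}"
      and h: "bij_betw h (fst X) (pow_carrier A n)"
      and hom: "\<forall>g xs. length xs = ar g \<and> set xs \<subseteq> fst X \<longrightarrow> h (snd X g xs) = pow_ops A n g (map h xs)"
      and le: "\<forall>x\<in>fst X. \<forall>y\<in>fst X. le x y \<longleftrightarrow> antilex_le lt pi n (h x) (h y)"
      unfolding OVfin_def by auto
    have "finite (fst X)" using h pow_carrier_finite[OF pf(2)] bij_betw_finite by blast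
    moreover have "linear_on (fst X) le"
      by (rule linear_transfer[OF h antilex_linear[OF lt pi] le])
    moreover have "Vfin ar A X" by (rule ov_vfin[OF prim algX h hom])
    ultimately show "finite (fst X) \<and> linear_on (fst X) le \<and> Vfin ar A X" by blast
  next
    fix X :: "('b,'f) alg" assume VX: "Vfin ar A X"
    obtain n h where h: "bij_betw h (fst X) (pow_carrier A n)"
      and hom: "\<forall>g xs. length xs = ar g \<and> set xs \<subseteq> fst X \<longrightarrow> h (snd X g xs) = pow_ops A n g (map h xs)"
      using foster[OF prim VX] by blast
    have algX: "alg ar X" using VX unfolding Vfin_def by blast
    have "OVfin ar A lt (X, \<lambda>x y. antilex_le lt id n (h x) (h y))"
      unfolding OVfin_def using algX h hom by (auto intro!: exI[of _ n] exI[of _ id] exI[of _ h])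
    then show "\<exists>le. OVfin ar A lt (X, le)" by blast
  qed
  show "reasonable ar (Vfin ar A :: ('b,'f) alg \<Rightarrow> bool) (Vfin ar A :: ('c,'f) alg \<Rightarrow> bool)
           (OVfin ar A lt) (OVfin ar A lt)"
    unfolding reasonable_def
  proof (intro allI impI, elim conjE)
    fix X :: "('b,'f) alg" and Y :: "('c,'f) alg" and h le
    assume VX: "Vfin ar A X" and VY: "Vfin ar A Y" and emb: "alg_emb ar h X Y"
      and OX: "OVfin ar A lt (X, le)"
    obtain m pi hX where algX: "alg ar X" and pi: "bij_betw pi {..<m} {..<m}"
      and hX: "bij_betw hX (fst X) (pow_carrier A m)"
      and hXhom: "\<forall>g xs. length xs = ar g \<and> set xs \<subseteq> fst X \<longrightarrow> hX (snd X g xs) = pow_ops A m g (map hX xs)"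
      and le: "\<forall>x\<in>fst X. \<forall>y\<in>fst X. le x y \<longleftrightarrow> antilex_le lt pi m (hX x) (hX y)"
      using OX unfolding OVfin_def by auto
    obtain n hY where hY: "bij_betw hY (fst Y) (pow_carrier A n)"
      and hYhom: "\<forall>g xs. length xs = ar g \<and> set xs \<subseteq> fst Y \<longrightarrow> hY (snd Y g xs) = pow_ops A n g (map hY xs)"
      using foster[OF prim VY] by blast
    have algY: "alg ar Y" using VY unfolding Vfin_def by blast
    obtain pi' where pi': "bij_betw pi' {..<n} {..<n}"
      and eq: "\<forall>x1\<in>fst X. \<forall>x2\<in>fst X.
        antilex_le lt pi m (hX x1) (hX x2) \<longleftrightarrow> antilex_le lt pi' n (hY (h x1)) (hY (h x2))"
      using reasonable_step[OF prim lt algX emb pi hX hXhom hY hYhom] by blast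
    define le' where "le' = (\<lambda>y1 y2. antilex_le lt pi' n (hY y1) (hY y2))"
    have "OVfin ar A lt (Y, le')"
      unfolding OVfin_def le'_def using algY pi' hY hYhom by (auto intro!: exI[of _ n] exI[of _ pi'] exI[of _ hY])
    moreover have "ord_emb ar h (X, le) (Y, le')"
      unfolding ord_emb_def le'_def using emb le eq by simp
    ultimately show "\<exists>le'. OVfin ar A lt (Y, le') \<and> ord_emb ar h (X, le) (Y, le')" by blast
  qed
qed

end
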